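(* Let $q=p^{m_0}$ with $p$ prime, let $\rho$ be a permutation of $\{0,1,2,\ldots\}$, let $\mathcal O=\mathbb{F}_q[[\pi]]\subset k_\infty=\mathbb{F}_q((\pi))$, let $U$ be the group of units of $\mathcal O$ and $U_1\subseteq U$ the units congruent to $1$ modulo $\pi$. Then, as sets, each of $\mathcal O$, $U$ and $U_1$ is mapped into itself by $\rho_\ast$.
   Context: For $y\in\mathbb{Z}_p$ written $q$-adically as $y=\sum_{j\ge0}c_jq^j$ with $0\le c_j<q$, set $\rho_\ast y:=\sum_{j\ge0}c_jq^{\rho(j)}$; this bijection of $\mathbb{Z}_p$ stabilizes both the nonnegative and the nonpositive integers (negative integers being regarded as elements of $\mathbb{Z}_p$). For $x=\sum_{j\gg-\infty}c_j\pi^j\in k_\infty$ with $c_j\in\mathbb{F}_q$, define $\rho_\ast x:=\sum_{j}c_j\pi^{\rho_\ast j}$; this is a continuous $\mathbb{F}_q$-linear automorphism of $k_\infty$. *)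

theory Defs
  imports "HOL-Computational_Algebra.Formal_Laurent_Series"
begin

text \<open>The j-th q-adic digit of an integer n, viewed as an element of Z_p
  (floor division makes this correct also for negative n).\<close>
definition qdigit :: "int \<Rightarrow> int \<Rightarrow> nat \<Rightarrow> int" where
  "qdigit q n j = (n div q ^ j) mod q"

definition rho_star_int :: "int \<Rightarrow> (nat \<Rightarrow> nat) \<Rightarrow> int \<Rightarrow> int" where
  "rho_star_int q \<rho> n = (THE m. \<forall>j. qdigit q m (\<rho> j) = qdigit q n j)"

definition rho_star :: "int \<Rightarrow> (nat \<Rightarrow> nat) \<Rightarrow> 'a::zero fls \<Rightarrow> 'a fls" where
  "rho_star q \<rho> x = (THE y. \<forall>j. fls_nth y (rho_star_int q \<rho> j) = fls_nth x j)"

definition intO :: "'a::comm_ring_1 fls set" where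
  "intO = {x. \<forall>j<0. fls_nth x j = 0}"

definition unitsO :: "'a::comm_ring_1 fls set" where
  "unitsO = {x \<in> intO. \<exists>y\<in>intO. x * y = 1}"

definition units1O :: "'a::comm_ring_1 fls set" where
  "units1O = {x \<in> unitsO. \<exists>y\<in>intO. x - 1 = fls_X * y}"

end

theory Submission imports Defs begin
lemma unitsO_iff:
  fixes x :: "'a::field fls"
  shows "x \<in> unitsO \<longleftrightarrow> x \<in> intO \<and> fls_nth x 0 \<noteq> 0"
proof
  assume "x \<in> unitsO"
  then obtain y where x: "x \<in> intO" and y: "y \<in> intO" and xy: "x * y = 1"
    unfolding unitsO_def by auto
  have "x \<noteq> 0" "y \<noteq> 0" using xy by auto
  have "0 \<le> fls_subdegree x" using x unfolding intO_def by (intro fls_subdegree_ge0I) auto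
  moreover have "0 \<le> fls_subdegree y" using y unfolding intO_def by (intro fls_subdegree_ge0I) auto
  moreover have "fls_subdegree x + fls_subdegree y = 0"
    using fls_subdegree_mult[OF \<open>x \<noteq> 0\<close> \<open>y \<noteq> 0\<close>] xy by simp
  ultimately have "fls_subdegree x = 0" by linarith
  with nth_fls_subdegree_nonzero[OF \<open>x \<noteq> 0\<close>] x show "x \<in> intO \<and> fls_nth x 0 \<noteq> 0" by simp
next
  assume a: "x \<in> intO \<and> fls_nth x 0 \<noteq> 0"
  hence "x \<noteq> 0" by auto
  have sd: "fls_subdegree x = 0" using a unfolding intO_def by (intro fls_subdegree_eqI) auto
  have "inverse x \<in> intO" unfolding intO_def using sd by auto
  moreover have "x * inverse x = 1" using \<open>x \<noteq> 0\<close> by simp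
  ultimately show "x \<in> unitsO" using a unfolding unitsO_def by auto
qed

lemma units1O_iff:
  fixes x :: "'a::field fls"
  shows "x \<in> units1O \<longleftrightarrow> x \<in> unitsO \<and> fls_nth x 0 = 1"
proof
  assume "x \<in> units1O"
  then obtain y where x: "x \<in> unitsO" and y: "y \<in> intO" and e: "x - 1 = fls_X * y"
    unfolding units1O_def by auto
  have "fls_nth (x - 1) 0 = fls_nth y (-1)" using e by (simp add: fls_X_times_conv_shift)
  also have "\<dots> = 0" using y unfolding intO_def by auto
  finally show "x \<in> unitsO \<and> fls_nth x 0 = 1" using x by simp
next
  assume a: "x \<in> unitsO \<and> fls_nth x 0 = 1"
  define y where "y = fls_shift 1 (x - 1)"
  have "x - 1 = fls_X * y" unfolding y_def by (intro fls_eqI) (simp add: fls_X_times_conv_shift)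
  moreover have "y \<in> intO" unfolding intO_def y_def
  proof (intro CollectI allI impI)
    fix j :: int assume "j < 0"
    show "fls_nth (fls_shift 1 (x - 1)) j = 0"
    proof (cases "j = -1")
      case True thus ?thesis using a by simp
    next
      case False
      hence "j + 1 < 0" using \<open>j<0\<close> by simp
      thus ?thesis using a unfolding unitsO_def intO_def by auto
    qed
  qed
  ultimately show "x \<in> units1O" using a unfolding units1O_def by auto
qed
lemma qdigit_bounds: "q \<ge> 2 \<Longrightarrow> 0 \<le> qdigit q n j \<and> qdigit q n j < q"
  unfolding qdigit_def by simp

lemma qdigit_mod: "q \<ge> 2 \<Longrightarrow> qdigit q n j = (n mod q ^ Suc j) div q ^ j"
proof -
  assume q: "q \<ge> 2"
  have e: "n mod q ^ Suc j = q ^ j * (n div q ^ j mod q) + n mod q ^ j"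
    unfolding power_Suc2 using q by (intro zmod_zmult2_eq) simp
  have z: "(n mod q ^ j) div q ^ j = 0" using q by simp
  have "q ^ j \<noteq> 0" using q by simp
  from div_mult_self4[OF this, of "n div q ^ j mod q" "n mod q ^ j"]
  have "(q ^ j * (n div q ^ j mod q) + n mod q ^ j) div q ^ j = n div q ^ j mod q"
    using z by linarith
  thus ?thesis unfolding qdigit_def e by simp
qed

lemma pow_gt: "(q::int) \<ge> 2 \<Longrightarrow> int J < q ^ J"
proof -
  assume q: "q \<ge> 2"
  have "int J < 2 ^ J" using less_exp[of J] by (metis of_nat_less_iff of_nat_numeral of_nat_power)
  also have "\<dots> \<le> q ^ J" using q by (intro power_mono) auto
  finally show ?thesis .
qed

lemma digits_mod_eq:
  assumes q: "q \<ge> 2" and d: "\<forall>j. qdigit q m j = qdigit q n j"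
  shows "m mod q ^ J = n mod q ^ J"
proof (induction J)
  case 0 then show ?case by simp
next
  case (Suc J)
  have "m mod q ^ Suc J = q ^ J * (m div q ^ J mod q) + m mod q ^ J"
    unfolding power_Suc2 using q by (intro zmod_zmult2_eq) simp
  moreover have "n mod q ^ Suc J = q ^ J * (n div q ^ J mod q) + n mod q ^ J"
    unfolding power_Suc2 using q by (intro zmod_zmult2_eq) simp
  ultimately show ?case using Suc d unfolding qdigit_def by simp
qed

lemma digits_eq:
  assumes q: "q \<ge> 2" and d: "\<forall>j. qdigit q m j = qdigit q n j"
  shows "m = n"
proof (rule ccontr)
  assume ne: "m \<noteq> n"
  define J where "J = nat (\<bar>m\<bar> + \<bar>n\<bar>)"
  have "m mod q ^ J = n mod q ^ J" using digits_mod_eq[OF q d] .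
  hence "q ^ J dvd m - n" by (simp add: mod_eq_dvd_iff)
  hence "\<bar>q ^ J\<bar> \<le> \<bar>m - n\<bar>" using ne by (intro dvd_imp_le_int) auto
  moreover have "int J < q ^ J" using pow_gt[OF q] .
  moreover have "\<bar>q ^ J\<bar> = q ^ J" using q by simp
  ultimately show False unfolding J_def by linarith
qed

lemma digit_shift_low:
  assumes q: "q \<ge> 2" and j: "j < N"
  shows "qdigit q (a + c * q ^ N) j = qdigit q a j"
proof -
  have "q ^ N = q ^ Suc j * q ^ (N - Suc j)" using j by (simp flip: power_add del: power_Suc)
  hence "(a + c * q ^ N) mod q ^ Suc j = a mod q ^ Suc j"
    using mod_mult_self1[of a "c * q ^ (N - Suc j)" "q ^ Suc j"] by (simp add: ac_simps del: power_Suc)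
  thus ?thesis using qdigit_mod[OF q] by simp
qed

lemma digit_shift_high:
  assumes q: "q \<ge> 2" and j: "N \<le> j" and a: "0 \<le> a" "a < q ^ N"
  shows "qdigit q (a + c * q ^ N) j = (c div q ^ (j - N)) mod q"
proof -
  have qN: "q ^ N > 0" using q by simp
  have "(a + c * q ^ N) div q ^ N = c + a div q ^ N" using qN div_mult_self1[of "q ^ N" a c] by linarith
  also have "a div q ^ N = 0" using a by simp
  finally have "(a + c * q ^ N) div q ^ N = c" by simp
  moreover have "q ^ j = q ^ N * q ^ (j - N)" using j by (simp flip: power_add)
  ultimately have "(a + c * q ^ N) div q ^ j = c div q ^ (j - N)"
    using q by (simp add: zdiv_zmult2_eq)
  thus ?thesis unfolding qdigit_def by simp
qed

lemma partial_digits: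
  assumes q: "q \<ge> 2" and d: "\<forall>j<N. 0 \<le> d j \<and> d j < q"
  shows "0 \<le> (\<Sum>j<N. d j * q ^ j) \<and> (\<Sum>j<N. d j * q ^ j) < q ^ N \<and>
         (\<forall>j<N. qdigit q (\<Sum>j<N. d j * q ^ j) j = d j)"
  using d
proof (induction N)
  case 0 then show ?case by simp
next
  case (Suc N)
  define S where "S = (\<Sum>j<N. d j * q ^ j)"
  have IH: "0 \<le> S" "S < q ^ N" "\<forall>j<N. qdigit q S j = d j" using Suc unfolding S_def by auto
  have dN: "0 \<le> d N" "d N < q" using Suc.prems by auto
  have eq: "(\<Sum>j<Suc N. d j * q ^ j) = S + d N * q ^ N" unfolding S_def by simp
  have "0 \<le> d N * q ^ N" using dN q by simp
  moreover have "d N * q ^ N \<le> (q - 1) * q ^ N" using dN q by (intro mult_right_mono) auto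
  ultimately have b: "0 \<le> S + d N * q ^ N" "S + d N * q ^ N < q ^ Suc N"
    using IH by (auto simp: algebra_simps)
  have "\<forall>j<Suc N. qdigit q (S + d N * q ^ N) j = d j"
  proof (intro allI impI)
    fix j assume "j < Suc N"
    show "qdigit q (S + d N * q ^ N) j = d j"
    proof (cases "j < N")
      case True thus ?thesis using digit_shift_low[OF q True] IH by simp
    next
      case False
      hence "j = N" using \<open>j < Suc N\<close> by simp
      thus ?thesis using digit_shift_high[OF q _ IH(1,2), of N "d N"] dN by simp
    qed
  qed
  with b show ?case unfolding eq by simp
qed

lemma neg1_div: "(k::int) > 0 \<Longrightarrow> (-1) div k = -1"
  by (smt (verit) div_pos_neg_trivial div_minus_minus zdiv_zminus1_eq_if)

lemma digits_exist:
  assumes q: "q \<ge> 2" and d: "\<forall>k. 0 \<le> d k \<and> d k < q" and F: "finite F"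
    and c: "c = 0 \<or> c = q - 1" and out: "\<forall>k. k \<notin> F \<longrightarrow> d k = c"
  shows "\<exists>m. \<forall>k. qdigit q m k = d k"
proof -
  obtain N where N: "\<forall>k\<in>F. k < N" using finite_nat_bounded[OF F] by (auto simp: lessThan_def)
  define S where "S = (\<Sum>j<N. d j * q ^ j)"
  have P: "0 \<le> S" "S < q ^ N" "\<forall>j<N. qdigit q S j = d j"
    using partial_digits[OF q, of N d] d unfolding S_def by auto
  define e :: int where "e = (if c = 0 then 0 else -1)"
  have "\<forall>k. qdigit q (S + e * q ^ N) k = d k"
  proof
    fix k
    show "qdigit q (S + e * q ^ N) k = d k"
    proof (cases "k < N")
      case True thus ?thesis using digit_shift_low[OF q True] P by simp
    next
      case False
      hence "k \<notin> F" using N by auto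
      hence dk: "d k = c" using out by simp
      have "qdigit q (S + e * q ^ N) k = (e div q ^ (k - N)) mod q"
        using digit_shift_high[OF q _ P(1,2)] False by simp
      also have "\<dots> = c"
      proof (cases "c = 0")
        case True thus ?thesis unfolding e_def by simp
      next
        case False
        have "q ^ (k - N) > 0" using q by simp
        hence "e div q ^ (k - N) = -1" using False neg1_div unfolding e_def by simp
        moreover have "(-1) mod q = q - 1" using q by (simp add: zmod_minus1)
        ultimately show ?thesis using False c by simp
      qed
      finally show ?thesis using dk by simp
    qed
  qed
  thus ?thesis by blast
qed

lemma digits_eventually:
  assumes q: "q \<ge> 2"
  shows "finite {j. qdigit q n j \<noteq> (if n \<ge> 0 then 0 else q - 1)}"
proof -
  define J where "J = nat \<bar>n\<bar>"
  have "{j. qdigit q n j \<noteq> (if n \<ge> 0 then 0 else q - 1)} \<subseteq> {..<J}"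
  proof
    fix j assume j: "j \<in> {j. qdigit q n j \<noteq> (if n \<ge> 0 then 0 else q - 1)}"
    show "j \<in> {..<J}"
    proof (rule ccontr)
      assume "j \<notin> {..<J}"
      hence "J \<le> j" by simp
      hence "q ^ J \<le> q ^ j" using q by (intro power_increasing) auto
      moreover have "int J < q ^ J" using pow_gt[OF q] .
      ultimately have lt: "\<bar>n\<bar> < q ^ j" unfolding J_def by linarith
      have "qdigit q n j = (if n \<ge> 0 then 0 else q - 1)"
      proof (cases "n \<ge> 0")
        case True
        hence "n div q ^ j = 0" using lt by simp
        thus ?thesis using True unfolding qdigit_def by simp
      next
        case False
        have "n div q ^ j = -1" using False lt q
          by (smt (verit, best) div_pos_neg_trivial div_minus_minus neg1_div zdiv_mono1 zdiv_zminus1_eq_if zero_less_power)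
        thus ?thesis using False q unfolding qdigit_def by (simp add: zmod_minus1)
      qed
      with j show False by simp
    qed
  qed
  thus ?thesis by (rule finite_subset) simp
qed

lemma digits_perm:
  assumes q: "q \<ge> 2" and t: "bij (\<tau>::nat\<Rightarrow>nat)"
  shows "\<exists>m. \<forall>k. qdigit q m k = qdigit q n (\<tau> k)"
proof -
  define c where "c = (if n \<ge> 0 then 0 else q - 1)"
  define F where "F = inv \<tau> ` {j. qdigit q n j \<noteq> c}"
  have "finite F" unfolding F_def c_def using digits_eventually[OF q] by simp
  moreover have "\<forall>k. k \<notin> F \<longrightarrow> qdigit q n (\<tau> k) = c"
  proof (intro allI impI)
    fix k assume "k \<notin> F"
    have "inv \<tau> (\<tau> k) = k" using t by (simp add: bij_def)
    thus "qdigit q n (\<tau> k) = c" using \<open>k \<notin> F\<close> unfolding F_def by (metis (mono_tags) image_eqI mem_Collect_eq)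
  qed
  ultimately show ?thesis
    using digits_exist[OF q, of "\<lambda>k. qdigit q n (\<tau> k)" F c] qdigit_bounds[OF q] c_def by auto
qed

lemma rsi_digits:
  assumes q: "q \<ge> 2" and r: "bij \<rho>"
  shows "\<forall>k. qdigit q (rho_star_int q \<rho> n) k = qdigit q n (inv \<rho> k)"
proof -
  have bi: "bij (inv \<rho>)" using r by (simp add: bij_imp_bij_inv)
  obtain m where m: "\<forall>k. qdigit q m k = qdigit q n (inv \<rho> k)" using digits_perm[OF q bi] by blast
  have P: "(\<forall>j. qdigit q m' (\<rho> j) = qdigit q n j) \<longleftrightarrow> (\<forall>k. qdigit q m' k = qdigit q n (inv \<rho> k))" for m'
    using r by (metis bij_inv_eq_iff)
  have "rho_star_int q \<rho> n = m"
    unfolding rho_star_int_def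
  proof (rule the_equality)
    show "\<forall>j. qdigit q m (\<rho> j) = qdigit q n j" using P m by blast
  next
    fix m' assume "\<forall>j. qdigit q m' (\<rho> j) = qdigit q n j"
    hence "\<forall>k. qdigit q m' k = qdigit q n (inv \<rho> k)" using P by blast
    thus "m' = m" using m digits_eq[OF q] by simp
  qed
  thus ?thesis using m by simp
qed

lemma rsi_bij:
  assumes q: "q \<ge> 2" and r: "bij \<rho>"
  shows "bij (rho_star_int q \<rho>)"
proof (rule bijI)
  show "inj (rho_star_int q \<rho>)"
  proof (rule injI)
    fix a b assume e: "rho_star_int q \<rho> a = rho_star_int q \<rho> b"
    have "\<forall>j. qdigit q a j = qdigit q b j"
    proof
      fix j
      have "qdigit q a (inv \<rho> (\<rho> j)) = qdigit q b (inv \<rho> (\<rho> j))"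
        using rsi_digits[OF q r, of a] rsi_digits[OF q r, of b] e by metis
      thus "qdigit q a j = qdigit q b j" using r by (simp add: bij_def)
    qed
    thus "a = b" using digits_eq[OF q] by blast
  qed
next
  show "surj (rho_star_int q \<rho>)"
  proof -
    have "m \<in> range (rho_star_int q \<rho>)" for m
    proof -
      obtain n where n: "\<forall>k. qdigit q n k = qdigit q m (\<rho> k)" using digits_perm[OF q r] by blast
      have "\<forall>k. qdigit q (rho_star_int q \<rho> n) k = qdigit q m k"
        using rsi_digits[OF q r, of n] n surj_f_inv_f[OF bij_is_surj[OF r]] by simp
      hence "rho_star_int q \<rho> n = m" using digits_eq[OF q] by blast
      thus ?thesis by blast
    qed
    thus ?thesis by blast
  qed
qed

lemma nonneg_iff_finite:
  assumes q: "q \<ge> 2"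
  shows "n \<ge> 0 \<longleftrightarrow> finite {j. qdigit q n j \<noteq> 0}"
proof
  assume "n \<ge> 0" thus "finite {j. qdigit q n j \<noteq> 0}" using digits_eventually[OF q, of n] by simp
next
  assume f: "finite {j. qdigit q n j \<noteq> 0}"
  show "n \<ge> 0"
  proof (rule ccontr)
    assume "\<not> n \<ge> 0"
    hence f2: "finite {j. qdigit q n j \<noteq> q - 1}" using digits_eventually[OF q, of n] by simp
    have "UNIV = {j. qdigit q n j \<noteq> 0} \<union> {j. qdigit q n j \<noteq> q - 1}" using q by auto
    thus False using f f2 by (metis finite_Un infinite_UNIV_nat)
  qed
qed

lemma rsi_nonneg:
  assumes q: "q \<ge> 2" and r: "bij \<rho>"
  shows "rho_star_int q \<rho> n \<ge> 0 \<longleftrightarrow> n \<ge> 0"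
proof -
  have "{k. qdigit q (rho_star_int q \<rho> n) k \<noteq> 0} = \<rho> ` {j. qdigit q n j \<noteq> 0}"
    using rsi_digits[OF q r, of n] r
    using inv_f_f[OF bij_is_inj[OF r]] surj_f_inv_f[OF bij_is_surj[OF r]]
    by (auto simp: image_iff) (metis)
  moreover have "inj \<rho>" using r by (simp add: bij_def)
  ultimately show ?thesis using nonneg_iff_finite[OF q] finite_image_iff[OF inj_on_subset[OF \<open>inj \<rho>\<close> subset_UNIV]] by simp
qed

lemma rsi_zero:
  assumes q: "q \<ge> 2" and r: "bij \<rho>"
  shows "rho_star_int q \<rho> 0 = 0"
  using rsi_digits[OF q r, of 0] digits_eq[OF q, of "rho_star_int q \<rho> 0" 0] by (simp add: qdigit_def)

lemma rho_star_O:
  fixes x :: "'a::field fls"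
  assumes q: "q \<ge> 2" and r: "bij \<rho>" and x: "x \<in> intO"
  shows "rho_star q \<rho> x \<in> intO \<and> (\<forall>j. fls_nth (rho_star q \<rho> x) (rho_star_int q \<rho> j) = fls_nth x j)"
proof -
  let ?s = "rho_star_int q \<rho>"
  have b: "bij ?s" using rsi_bij[OF q r] .
  define y :: "'a fls" where "y = fps_to_fls (Abs_fps (\<lambda>n. fls_nth x (inv ?s (int n))))"
  have yk: "fls_nth y k = fls_nth x (inv ?s k)" for k
  proof (cases "k < 0")
    case True
    have "inv ?s k < 0"
    proof (rule ccontr)
      assume "\<not> inv ?s k < 0"
      hence "?s (inv ?s k) \<ge> 0" using rsi_nonneg[OF q r] by simp
      thus False using True surj_f_inv_f[OF bij_is_surj[OF b]] by simp
    qed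
    thus ?thesis using True x unfolding y_def intO_def by simp
  next
    case False thus ?thesis unfolding y_def by simp
  qed
  have yprop: "\<forall>j. fls_nth y (?s j) = fls_nth x j" using yk inv_f_f[OF bij_is_inj[OF b]] by simp
  have "rho_star q \<rho> x = y"
    unfolding rho_star_def
  proof (rule the_equality)
    show "\<forall>j. fls_nth y (?s j) = fls_nth x j" by (fact yprop)
  next
    fix y' :: "'a fls" assume a: "\<forall>j. fls_nth y' (?s j) = fls_nth x j"
    show "y' = y"
    proof (rule fls_eqI)
      fix k
      have "fls_nth y' (?s (inv ?s k)) = fls_nth x (inv ?s k)" using a by blast
      thus "fls_nth y' k = fls_nth y k" using yk surj_f_inv_f[OF bij_is_surj[OF b]] by simp
    qed
  qed
  moreover have "y \<in> intO" unfolding y_def intO_def by simp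
  ultimately show ?thesis using yprop by simp
qed

theorem proposition7p10:
  fixes p m0 :: nat and q :: int and \<rho> :: "nat \<Rightarrow> nat"
  assumes "prime p" and "m0 \<ge> 1" and "q = int p ^ m0"
    and "card (UNIV :: 'a::{field,finite} set) = p ^ m0"
    and "bij \<rho>"
  shows "rho_star q \<rho> ` (intO :: 'a fls set) \<subseteq> intO \<and>
    rho_star q \<rho> ` (unitsO :: 'a fls set) \<subseteq> unitsO \<and>
    rho_star q \<rho> ` (units1O :: 'a fls set) \<subseteq> units1O"
proof -
  have p2: "int p \<ge> 2" using assms(1) prime_ge_2_nat by auto
  have "int p ^ 1 \<le> int p ^ m0" using p2 assms(2) by (intro power_increasing) auto
  hence q: "q \<ge> 2" using p2 assms(3) by (metis order_trans power_one_right)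
  note r = assms(5)
  have z: "rho_star_int q \<rho> 0 = 0" using rsi_zero[OF q r] .
  have O: "rho_star q \<rho> x \<in> intO \<and> fls_nth (rho_star q \<rho> x) 0 = fls_nth x 0"
    if "x \<in> intO" for x :: "'a fls"
    using rho_star_O[OF q r that] z by metis
  show ?thesis
  proof (intro conjI subsetI)
    fix y assume "y \<in> rho_star q \<rho> ` (intO :: 'a fls set)"
    thus "y \<in> intO" using O by auto
  next
    fix y assume "y \<in> rho_star q \<rho> ` (unitsO :: 'a fls set)"
    then obtain x where "x \<in> unitsO" "y = rho_star q \<rho> x" by auto
    thus "y \<in> unitsO" using O unitsO_iff by metis
  next
    fix y assume "y \<in> rho_star q \<rho> ` (units1O :: 'a fls set)"
    then obtain x where "x \<in> units1O" "y = rho_star q \<rho> x" by auto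
    thus "y \<in> units1O" using O unitsO_iff units1O_iff by metis
  qed
qed

end
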